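(* Let $a>0$ and let $F$ be a smooth function on $\mathbb H^2(-a^2)$; set $f=F\circ Y^{-1}$ on the Euclidean unit disc $D_O(1)$. Then, provided the right-hand side is finite, $$\|\overline\nabla(\nabla F)\|_{L^2(\mathbb H^2(-a^2))}^2\le 10a^2\int_{D_O(1)}\Big\{|\nabla^{\mathbb R^2}f|^2+(1-|y|^2)^2|\nabla^{\mathbb R^2}\nabla^{\mathbb R^2}f|^2\Big\}\,dy_1\,dy_2,$$ where $|\nabla^{\mathbb R^2}\nabla^{\mathbb R^2}f|^2=\sum_{i,j=1}^2|\partial_{y_i}\partial_{y_j}f|^2$.
   Context: $\mathbb H^2(-a^2)$ is realized as the hyperboloid $\{(x_0,x_1,x_2)\in\mathbb R^3: x_0^2-x_1^2-x_2^2=1/a^2,\ x_0>0\}$ with the metric induced by $-dx_0^2+dx_1^2+dx_2^2$; it is the two-dimensional hyperbolic space of constant curvature $-a^2$. $Y:\mathbb H^2(-a^2)\to D_O(1)=\{y\in\mathbb R^2:|y|<1\}$ is the global coordinate chart $Y(x)=(x_1,x_2)/(x_0+1/a)$, in which the metric is $g=\frac{4}{a^2(1-|y|^2)^2}(dy_1^2+dy_2^2)$. $\nabla F$ is the Riemannian gradient vector field of $F$, $\overline\nabla$ the Levi-Civita connection, and $|\overline\nabla(\nabla F)|$ the pointwise norm of this $(1,1)$-tensor with respect to the induced metric; $L^2$ is with respect to the Riemannian volume. $\nabla^{\mathbb R^2}$ denotes the Euclidean gradient on $D_O(1)$. *)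

theory Defs
  imports "HOL-Analysis.Analysis"
begin

definition hyperboloid :: "real \<Rightarrow> (real \<times> real \<times> real) set" where
  "hyperboloid a = {(x0, x1, x2). x0\<^sup>2 - x1\<^sup>2 - x2\<^sup>2 = 1 / a\<^sup>2 \<and> x0 > 0}"

definition chartY :: "real \<Rightarrow> real \<times> real \<times> real \<Rightarrow> real \<times> real" where
  "chartY a x = (case x of (x0, x1, x2) \<Rightarrow> (x1 / (x0 + 1 / a), x2 / (x0 + 1 / a)))"

definition unit_disc :: "(real \<times> real) set" where
  "unit_disc = {y. (fst y)\<^sup>2 + (snd y)\<^sup>2 < 1}"

definition pd :: "nat \<Rightarrow> (real \<times> real \<Rightarrow> real) \<Rightarrow> real \<times> real \<Rightarrow> real" where
  "pd i g y = (if i = 1 then deriv (\<lambda>t. g (t, snd y)) (fst y)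
               else deriv (\<lambda>t. g (fst y, t)) (snd y))"

definition has_pd :: "nat \<Rightarrow> (real \<times> real \<Rightarrow> real) \<Rightarrow> real \<times> real \<Rightarrow> bool" where
  "has_pd i g y = (if i = 1 then (\<lambda>t. g (t, snd y)) differentiable (at (fst y))
                   else (\<lambda>t. g (fst y, t)) differentiable (at (snd y)))"

fun iter_pd :: "nat list \<Rightarrow> (real \<times> real \<Rightarrow> real) \<Rightarrow> real \<times> real \<Rightarrow> real" where
  "iter_pd [] g = g"
| "iter_pd (i # ds) g = pd i (iter_pd ds g)"

definition smooth_on :: "(real \<times> real) set \<Rightarrow> (real \<times> real \<Rightarrow> real) \<Rightarrow> bool" where
  "smooth_on S g = (\<forall>ds. set ds \<subseteq> {1, 2} \<longrightarrow>
      continuous_on S (iter_pd ds g) \<and> (\<forall>i\<in>{1, 2}. \<forall>y\<in>S. has_pd i (iter_pd ds g) y))"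

definition hmetric :: "real \<Rightarrow> nat \<Rightarrow> nat \<Rightarrow> real \<times> real \<Rightarrow> real" where
  "hmetric a i j y = (if i = j then 4 / (a\<^sup>2 * (1 - ((fst y)\<^sup>2 + (snd y)\<^sup>2))\<^sup>2) else 0)"

definition hmetric_inv :: "real \<Rightarrow> nat \<Rightarrow> nat \<Rightarrow> real \<times> real \<Rightarrow> real" where
  "hmetric_inv a i j y = (if i = j then (a\<^sup>2 * (1 - ((fst y)\<^sup>2 + (snd y)\<^sup>2))\<^sup>2) / 4 else 0)"

definition christoffel :: "real \<Rightarrow> nat \<Rightarrow> nat \<Rightarrow> nat \<Rightarrow> real \<times> real \<Rightarrow> real" where
  "christoffel a k i j y = (1/2) * (\<Sum>l\<in>{1,2}. hmetric_inv a k l y *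
      (pd i (hmetric a j l) y + pd j (hmetric a i l) y - pd l (hmetric a i j) y))"

definition cov_hess :: "real \<Rightarrow> (real \<times> real \<Rightarrow> real) \<Rightarrow> nat \<Rightarrow> nat \<Rightarrow> real \<times> real \<Rightarrow> real" where
  "cov_hess a f i j y = pd i (pd j f) y - (\<Sum>k\<in>{1,2}. christoffel a k i j y * pd k f y)"

text \<open>(1,1)-tensor nabla(grad F): A^i_j = g^ik (nabla dF)_kj.\<close>
definition hess11 :: "real \<Rightarrow> (real \<times> real \<Rightarrow> real) \<Rightarrow> nat \<Rightarrow> nat \<Rightarrow> real \<times> real \<Rightarrow> real" where
  "hess11 a f i j y = (\<Sum>k\<in>{1,2}. hmetric_inv a i k y * cov_hess a f k j y)"

definition hess11_normsq :: "real \<Rightarrow> (real \<times> real \<Rightarrow> real) \<Rightarrow> real \<times> real \<Rightarrow> real" where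
  "hess11_normsq a f y = (\<Sum>i\<in>{1,2}. \<Sum>j\<in>{1,2}. \<Sum>k\<in>{1,2}. \<Sum>l\<in>{1,2}.
      hmetric a i k y * hmetric_inv a j l y * hess11 a f i j y * hess11 a f k l y)"

definition vol_density :: "real \<Rightarrow> real \<times> real \<Rightarrow> real" where
  "vol_density a y = sqrt (hmetric a 1 1 y * hmetric a 2 2 y - hmetric a 1 2 y * hmetric a 2 1 y)"

definition eucl_grad_sq :: "(real \<times> real \<Rightarrow> real) \<Rightarrow> real \<times> real \<Rightarrow> real" where
  "eucl_grad_sq f y = (\<Sum>i\<in>{1,2}. (pd i f y)\<^sup>2)"

definition eucl_hess_sq :: "(real \<times> real \<Rightarrow> real) \<Rightarrow> real \<times> real \<Rightarrow> real" where
  "eucl_hess_sq f y = (\<Sum>i\<in>{1,2}. \<Sum>j\<in>{1,2}. (pd i (pd j f) y)\<^sup>2)"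

end

theory Submission
  imports Defs
begin

lemma dA: assumes "a \<noteq> 0" "1 - (x\<^sup>2 + c) \<noteq> 0"
  shows "((\<lambda>t. 4 / (a\<^sup>2 * (1 - (t\<^sup>2 + c))\<^sup>2)) has_real_derivative 16*x/(a\<^sup>2*(1-(x\<^sup>2+c))^3)) (at x)"
proof -
  have h: "W \<noteq> 0 \<Longrightarrow> 16*(x*W)/(W\<^sup>2*(a\<^sup>2*W\<^sup>2)) = 16*x/(a\<^sup>2*W^3)" for W :: real
    by (simp add: power2_eq_square power3_eq_cube)
  show ?thesis
    apply (rule derivative_eq_intros refl)+
    using assms apply simp_all
    apply (rule h)
    using assms(2) apply simp
    done
qed

lemma dB: assumes "a \<noteq> 0" "1 - (c + x\<^sup>2) \<noteq> 0"
  shows "((\<lambda>t. 4 / (a\<^sup>2 * (1 - (c + t\<^sup>2))\<^sup>2)) has_real_derivative 16*x/(a\<^sup>2*(1-(c+x\<^sup>2))^3)) (at x)"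
  using dA[of a x c] assms by (simp add: add.commute)

lemma pd_hm:
  assumes "a \<noteq> 0" "u\<^sup>2 + v\<^sup>2 < 1" "i \<in> {1,2}"
  shows "pd i (hmetric a j l) (u,v) = (if j = l then 16 * (if i = 1 then u else v) / (a\<^sup>2*(1-(u\<^sup>2+v\<^sup>2))^3) else 0)"
proof (cases "j = l")
  case False then show ?thesis by (simp add: pd_def hmetric_def)
next
  case True
  have w: "1 - (u\<^sup>2 + v\<^sup>2) \<noteq> 0" using assms by simp
  show ?thesis
  proof (cases "i = 1")
    case True
    with `j=l` show ?thesis using DERIV_imp_deriv[OF dA[OF assms(1), of u "v\<^sup>2"]] w
      by (simp add: pd_def hmetric_def)
  next
    case False
    with `j=l` assms(3) show ?thesis using DERIV_imp_deriv[OF dB[OF assms(1), of "u\<^sup>2" v]] w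
      by (simp add: pd_def hmetric_def)
  qed
qed

lemma pd_hmw:
  assumes "a \<noteq> 0" "u\<^sup>2 + v\<^sup>2 < 1" "i \<in> {1,2}" "w = 1-(u\<^sup>2+v\<^sup>2)"
  shows "pd i (hmetric a j l) (u,v) = (if j = l then 16 * (if i = 1 then u else v) / (a\<^sup>2*w^3) else 0)"
  using pd_hm[OF assms(1-3)] assms(4) by simp

lemma hinvw: "w = 1-(u\<^sup>2+v\<^sup>2) \<Longrightarrow> hmetric_inv a k l (u,v) = (if k = l then a\<^sup>2*w\<^sup>2/4 else 0)"
  by (simp add: hmetric_inv_def)

lemma chr:
  assumes "a \<noteq> 0" "u\<^sup>2 + v\<^sup>2 < 1" "k \<in> {1,2}" "i \<in> {1,2}" "j \<in> {1,2}" "w = 1-(u\<^sup>2+v\<^sup>2)"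
  shows "christoffel a k i j (u,v) = 2 / w *
     ((if j = k then (if i = 1 then u else v) else 0) + (if i = k then (if j = 1 then u else v) else 0)
      - (if i = j then (if k = 1 then u else v) else 0))"
proof -
  have w: "w > 0" using assms by simp
  have e: "christoffel a k i j (u,v) = (1/2) * (a\<^sup>2 * w\<^sup>2/4) *
      (pd i (hmetric a j k) (u,v) + pd j (hmetric a i k) (u,v) - pd k (hmetric a i j) (u,v))"
    unfolding christoffel_def using assms(3) by (auto simp: hinvw[OF assms(6)])
  have alg: "(1/2) * (a\<^sup>2 * w\<^sup>2/4) * (X + Y - Z) = 2 / w * (a\<^sup>2 * w^3/16 * X + a\<^sup>2 * w^3/16 * Y - a\<^sup>2 * w^3/16 * Z)" for X Y Z :: real
    using w by (simp add: field_simps power2_eq_square power3_eq_cube)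
  have Q: "a\<^sup>2 * w^3/16 * pd i' (hmetric a j' l) (u,v) = (if j' = l then (if i' = 1 then u else v) else 0)"
    if "i' \<in> {1,2}" for i' j' l
    using pd_hmw[OF assms(1,2) that assms(6)] w assms(1) by simp
  have K: "(k=1 \<or> k=2) \<and> (i=1 \<or> i=2) \<and> (j=1 \<or> j=2)" using assms(3-5) by auto
  show ?thesis unfolding e alg Q[OF assms(4)] Q[OF assms(5)] Q[OF assms(3)]
    using K by (elim conjE disjE) simp_all
qed


lemma hmw: "w = 1-(u\<^sup>2+v\<^sup>2) \<Longrightarrow> hmetric a k l (u,v) = (if k = l then 4/(a\<^sup>2*w\<^sup>2) else 0)"
  by (simp add: hmetric_def)

lemma cov_vals:
  assumes "a \<noteq> 0" "u\<^sup>2 + v\<^sup>2 < 1" "w = 1-(u\<^sup>2+v\<^sup>2)"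
  shows "cov_hess a f 1 1 (u,v) = pd 1 (pd 1 f) (u,v) - 2/w*(u * pd 1 f (u,v) - v * pd 2 f (u,v))"
    "cov_hess a f 1 2 (u,v) = pd 1 (pd 2 f) (u,v) - 2/w*(v * pd 1 f (u,v) + u * pd 2 f (u,v))"
    "cov_hess a f 2 1 (u,v) = pd 2 (pd 1 f) (u,v) - 2/w*(v * pd 1 f (u,v) + u * pd 2 f (u,v))"
    "cov_hess a f 2 2 (u,v) = pd 2 (pd 2 f) (u,v) - 2/w*(v * pd 2 f (u,v) - u * pd 1 f (u,v))"
  unfolding cov_hess_def
  by (simp_all add: chr[OF assms(1,2) _ _ _ assms(3)], simp_all add: algebra_simps diff_divide_distrib add_divide_distrib)

lemma norm_eq:
  assumes "a \<noteq> 0" "u\<^sup>2 + v\<^sup>2 < 1" "w = 1-(u\<^sup>2+v\<^sup>2)"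
  shows "hess11_normsq a f (u,v) * vol_density a (u,v) = a\<^sup>2*w\<^sup>2/4 *
     ((cov_hess a f 1 1 (u,v))\<^sup>2 + (cov_hess a f 1 2 (u,v))\<^sup>2 + (cov_hess a f 2 1 (u,v))\<^sup>2 + (cov_hess a f 2 2 (u,v))\<^sup>2)"
proof -
  have w: "w > 0" using assms by simp
  have A: "\<And>i j. i \<in> {1,2} \<Longrightarrow> hess11 a f i j (u,v) = a\<^sup>2*w\<^sup>2/4 * cov_hess a f i j (u,v)"
    unfolding hess11_def by (auto simp: hinvw[OF assms(3)])
  have V: "vol_density a (u,v) = 4/(a\<^sup>2*w\<^sup>2)"
  proof -
    have "vol_density a (u,v) = sqrt ((4/(a\<^sup>2*w\<^sup>2))\<^sup>2)"
      unfolding vol_density_def by (simp add: hmw[OF assms(3)] power2_eq_square)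
    also have "\<dots> = 4/(a\<^sup>2*w\<^sup>2)" using w assms(1) by simp
    finally show ?thesis .
  qed
  show ?thesis
    unfolding hess11_normsq_def V using w assms(1)
    by (simp add: A hmw[OF assms(3)] hinvw[OF assms(3)] field_simps power2_eq_square)
qed


lemma sq2: "(x - y)\<^sup>2 \<le> 2 * x\<^sup>2 + 2 * (y::real)\<^sup>2"
  by (smt (verit) sum_squares_ge_zero power2_eq_square zero_le_power2 power2_diff power2_sum)

lemma key1:
  fixes w f X :: real
  assumes "w > 0"
  shows "w\<^sup>2 * (f - 2/w * X)\<^sup>2 \<le> 2 * w\<^sup>2 * f\<^sup>2 + 8 * X\<^sup>2"
proof -
  have "w\<^sup>2 * (f - 2/w * X)\<^sup>2 = (w * f - 2 * X)\<^sup>2" using assms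
    by (simp add: power2_eq_square field_simps)
  also have "\<dots> \<le> 2 * (w * f)\<^sup>2 + 2 * (2 * X)\<^sup>2" by (rule sq2)
  finally show ?thesis by (simp add: power_mult_distrib)
qed

lemma l1:
  fixes s p q r :: real
  assumes h: "s \<le> 2 * p + 16 * q" "q \<le> r" "0 \<le> p" "0 \<le> q"
  shows "s \<le> 40 * (r + p)"
proof -
  have 1: "16*q \<le> 16*r" using h(2) by simp
  have 2: "16*r \<le> 40*r" using h(2,4) by simp
  have 3: "2*p \<le> 40*p" using h(3) by simp
  have "2*p + 16*q \<le> 40*p + 40*r" using add_mono[OF 3 order_trans[OF 1 2]] .
  then have "s \<le> 40*p + 40*r" using h(1) by (rule order_trans[rotated])
  then show ?thesis by (simp add: algebra_simps)
qed

lemma lin: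
  fixes s w2 x q r :: real
  shows "s \<le> 2 * w2 * x + 16 * q \<Longrightarrow> q \<le> r \<Longrightarrow> 0 \<le> w2 * x \<Longrightarrow> 0 \<le> q \<Longrightarrow> s \<le> 40 * (r + w2 * x)"
  using l1[of s "w2 * x" q r] by (simp add: mult.assoc)

lemma key:
  fixes w u v a p1 p2 f11 f12 f21 f22 :: real
  assumes "w > 0" "u\<^sup>2 + v\<^sup>2 \<le> 1"
  shows "a\<^sup>2 * w\<^sup>2/4 * ((f11 - 2/w * (u * p1 - v * p2))\<^sup>2 + (f12 - 2/w * (v * p1 + u * p2))\<^sup>2
     + (f21 - 2/w * (v * p1 + u * p2))\<^sup>2 + (f22 - 2/w * (v * p2 - u * p1))\<^sup>2)
     \<le> 10 * a\<^sup>2 * ((p1\<^sup>2 + p2\<^sup>2) + w\<^sup>2 * (f11\<^sup>2 + f12\<^sup>2 + f21\<^sup>2 + f22\<^sup>2))"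
proof -
  let ?A = "u * p1 - v * p2" and ?B = "v * p1 + u * p2"
  have AB: "?A\<^sup>2 + ?B\<^sup>2 = (u\<^sup>2+v\<^sup>2) * (p1\<^sup>2+p2\<^sup>2)" unfolding power2_eq_square by algebra
  have AB2: "?A\<^sup>2 + ?B\<^sup>2 \<le> p1\<^sup>2+p2\<^sup>2" unfolding AB
    using assms(2) by (simp add: mult_left_le_one_le)
  have s: "w\<^sup>2 * ((f11 - 2/w*?A)\<^sup>2 + (f12 - 2/w*?B)\<^sup>2 + (f21 - 2/w*?B)\<^sup>2 + (f22 - 2/w * (-?A))\<^sup>2)
     \<le> 2 * w\<^sup>2 * (f11\<^sup>2 + f12\<^sup>2 + f21\<^sup>2 + f22\<^sup>2) + 16 * (?A\<^sup>2 + ?B\<^sup>2)"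
    using key1[OF assms(1), of f11 ?A] key1[OF assms(1), of f12 ?B] key1[OF assms(1), of f21 ?B]
      key1[OF assms(1), of f22 "-?A", unfolded power2_minus]
    unfolding distrib_left by linarith
  have e: "v * p2 - u * p1 = - ?A" by simp
  have E: "0 \<le> w\<^sup>2 * (f11\<^sup>2 + f12\<^sup>2 + f21\<^sup>2 + f22\<^sup>2)" by simp
  have "w\<^sup>2 * ((f11 - 2/w*?A)\<^sup>2 + (f12 - 2/w*?B)\<^sup>2 + (f21 - 2/w*?B)\<^sup>2 + (f22 - 2/w * (-?A))\<^sup>2)
     \<le> 40 * ((p1\<^sup>2 + p2\<^sup>2) + w\<^sup>2 * (f11\<^sup>2 + f12\<^sup>2 + f21\<^sup>2 + f22\<^sup>2))"
    by (rule lin[OF s AB2 E]) simp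
  then have "a\<^sup>2/4 * (w\<^sup>2 * ((f11 - 2/w*?A)\<^sup>2 + (f12 - 2/w*?B)\<^sup>2 + (f21 - 2/w*?B)\<^sup>2 + (f22 - 2/w * (-?A))\<^sup>2))
     \<le> a\<^sup>2/4 * (40 * ((p1\<^sup>2 + p2\<^sup>2) + w\<^sup>2 * (f11\<^sup>2 + f12\<^sup>2 + f21\<^sup>2 + f22\<^sup>2)))"
    by (rule mult_left_mono) simp
  then show ?thesis unfolding e by (simp add: algebra_simps)
qed

lemma pointwise:
  assumes "a > 0" "y \<in> unit_disc"
  shows "hess11_normsq a f y * vol_density a y \<le> 10 * a\<^sup>2 * (eucl_grad_sq f y
            + (1 - ((fst y)\<^sup>2 + (snd y)\<^sup>2))\<^sup>2 * eucl_hess_sq f y)"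
proof -
  obtain u v where y: "y = (u,v)" by fastforce
  define w where "w = 1-(u\<^sup>2+v\<^sup>2)"
  have d: "u\<^sup>2 + v\<^sup>2 < 1" using assms(2) y by (simp add: unit_disc_def)
  have a: "a \<noteq> 0" using assms by simp
  have w: "w > 0" using d w_def by simp
  show ?thesis unfolding y fst_conv snd_conv w_def[symmetric]
    norm_eq[OF a d w_def] cov_vals[OF a d w_def] eucl_grad_sq_def eucl_hess_sq_def
    using key[OF w less_imp_le[OF d], of a "pd 1 (pd 1 f) (u,v)" "pd 1 f (u,v)" "pd 2 f (u,v)" "pd 1 (pd 2 f) (u,v)"
      "pd 2 (pd 1 f) (u,v)" "pd 2 (pd 2 f) (u,v)"]
    by (simp add: add.assoc)
qed

theorem lemma3p1:
  fixes a :: real and F :: "real \<times> real \<times> real \<Rightarrow> real" and f :: "real \<times> real \<Rightarrow> real"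
  assumes "a > 0"
    and "f = F \<circ> inv_into (hyperboloid a) (chartY a)"
    and "smooth_on unit_disc f"
    and "(\<integral>\<^sup>+ y \<in> unit_disc. ennreal (eucl_grad_sq f y
            + (1 - ((fst y)\<^sup>2 + (snd y)\<^sup>2))\<^sup>2 * eucl_hess_sq f y) \<partial>lborel) < \<infinity>"
  shows "(\<integral>\<^sup>+ y \<in> unit_disc. ennreal (hess11_normsq a f y * vol_density a y) \<partial>lborel)
         \<le> ennreal (10 * a\<^sup>2) * (\<integral>\<^sup>+ y \<in> unit_disc. ennreal (eucl_grad_sq f y
            + (1 - ((fst y)\<^sup>2 + (snd y)\<^sup>2))\<^sup>2 * eucl_hess_sq f y) \<partial>lborel)"
proof -
  define G where "G y = eucl_grad_sq f y + (1 - ((fst y)\<^sup>2 + (snd y)\<^sup>2))\<^sup>2 * eucl_hess_sq f y" for y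
  have G0: "G y \<ge> 0" for y unfolding G_def eucl_grad_sq_def eucl_hess_sq_def
    by (intro add_nonneg_nonneg mult_nonneg_nonneg sum_nonneg) auto
  have c1: "continuous_on unit_disc (pd i f)" if "i \<in> {1,2}" for i
    using assms(3) that unfolding smooth_on_def by (metis iter_pd.simps empty_subsetI insert_subset list.set(1,2))
  have c2: "continuous_on unit_disc (pd i (pd j f))" if "i \<in> {1,2}" "j \<in> {1,2}" for i j
  proof -
    have "set [i,j] \<subseteq> {1,2}" using that by auto
    then show ?thesis using assms(3) unfolding smooth_on_def by (metis iter_pd.simps)
  qed
  have cG: "continuous_on unit_disc G"
    unfolding G_def eucl_grad_sq_def eucl_hess_sq_def
    by (intro continuous_intros c1 c2) auto
  have op: "open unit_disc" unfolding unit_disc_def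
    by (intro open_Collect_less continuous_intros)
  have M: "(\<lambda>x. indicator unit_disc x *\<^sub>R G x) \<in> borel_measurable borel"
    by (rule borel_measurable_continuous_on_indicator[OF _ cG]) (simp add: op)
  have M2: "(\<lambda>x. ennreal (G x) * indicator unit_disc x) \<in> borel_measurable lborel"
  proof -
    have "(\<lambda>x. ennreal (indicator unit_disc x *\<^sub>R G x)) \<in> borel_measurable lborel"
      using M by measurable
    moreover have "(\<lambda>x. ennreal (indicator unit_disc x *\<^sub>R G x)) = (\<lambda>x. ennreal (G x) * indicator unit_disc x)"
      by (auto simp: indicator_def)
    ultimately show ?thesis by simp
  qed
  have "(\<integral>\<^sup>+ y \<in> unit_disc. ennreal (hess11_normsq a f y * vol_density a y) \<partial>lborel)
     \<le> (\<integral>\<^sup>+ y. ennreal (10 * a\<^sup>2) * (ennreal (G y) * indicator unit_disc y) \<partial>lborel)"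
  proof (rule nn_integral_mono)
    fix y
    show "ennreal (hess11_normsq a f y * vol_density a y) * indicator unit_disc y
      \<le> ennreal (10 * a\<^sup>2) * (ennreal (G y) * indicator unit_disc y)"
    proof (cases "y \<in> unit_disc")
      case True
      have "ennreal (hess11_normsq a f y * vol_density a y) \<le> ennreal (10 * a\<^sup>2 * G y)"
        using pointwise[OF assms(1) True, of f] unfolding G_def by (rule ennreal_leI)
      also have "\<dots> = ennreal (10 * a\<^sup>2) * ennreal (G y)" using G0 by (simp add: ennreal_mult)
      finally show ?thesis using True by simp
    qed simp
  qed
  also have "\<dots> = ennreal (10 * a\<^sup>2) * (\<integral>\<^sup>+ y. ennreal (G y) * indicator unit_disc y \<partial>lborel)"
    by (rule nn_integral_cmult[OF M2])
  finally show ?thesis unfolding G_def .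
qed

end
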